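(* Let $t\geq 4$ be an even integer, let $k\geq 0$ be an integer and let $d$ be an even integer with $0\leq d<t$. Then the multiset $\{1,2^b,t^{tk+d}\}$ admits a special linear realization of type $2$ for every $b\geq t-1$ if $d\equiv 2\pmod 4$ and $t\equiv 2\pmod 4$, and for every $b\geq t-2$ otherwise.
   Context: $\{1,2^b,t^{m}\}$ is the multiset with one $1$, $b$ copies of $2$ and $m$ copies of $t$. For a multiset $L$ of positive integers with $|L|=v-1$, each at most $v-1$, a linear realization of $L$ is a Hamiltonian path $[x_0,\dots,x_{v-1}]$ of the complete graph on $\{0,\dots,v-1\}$ such that the multiset $\{|x_i-x_{i+1}|\}$ equals $L$. It is special of type $2$ if its endpoints are $0$ and $1$. *)

theory Defs
  imports Main "HOL-Library.Multiset"
begin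

definition path_lengths :: "nat list \<Rightarrow> nat multiset" where
  "path_lengths xs = mset (map (\<lambda>i. nat \<bar>int (xs ! i) - int (xs ! Suc i)\<bar>) [0..<length xs - 1])"

text \<open>A linear realization of L on {0,...,v-1}: a Hamiltonian path of K_v
  (a list enumerating {0..<v} without repetition) whose edge lengths form L.\<close>
definition linear_realization :: "nat \<Rightarrow> nat multiset \<Rightarrow> nat list \<Rightarrow> bool" where
  "linear_realization v L xs \<longleftrightarrow>
     size L = v - 1 \<and> (\<forall>l\<in>#L. 0 < l \<and> l \<le> v - 1) \<and>
     distinct xs \<and> set xs = {0..<v} \<and> path_lengths xs = L"

definition special_linear_realization_2 :: "nat \<Rightarrow> nat multiset \<Rightarrow> nat list \<Rightarrow> bool" where
  "special_linear_realization_2 v L xs \<longleftrightarrow>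
     linear_realization v L xs \<and> {hd xs, last xs} = {0, 1}"

definition L12t :: "nat \<Rightarrow> nat \<Rightarrow> nat \<Rightarrow> nat multiset" where
  "L12t b t m = {#1#} + replicate_mset b 2 + replicate_mset m t"

end

theory Submission
  imports Defs
begin

definition dd :: "nat \<Rightarrow> nat \<Rightarrow> nat" where
  "dd x y = nat \<bar>int x - int y\<bar>"

lemma pl_Nil[simp]: "path_lengths [] = {#}"
  by (simp add: path_lengths_def)

lemma pl_single[simp]: "path_lengths [x] = {#}"
  by (simp add: path_lengths_def)

lemma pl_Cons2[simp]: "path_lengths (x # y # xs) = add_mset (dd x y) (path_lengths (y # xs))"
proof -
  have "[0..<length (x # y # xs) - 1] = 0 # map Suc [0..<length (y # xs) - 1]"
    by (simp add: upt_conv_Cons map_Suc_upt del: upt_Suc)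
  then show ?thesis
    unfolding path_lengths_def dd_def by (simp add: comp_def)
qed

lemma pl_Cons: "ys \<noteq> [] \<Longrightarrow> path_lengths (x # ys) = add_mset (dd x (hd ys)) (path_lengths ys)"
  by (cases ys) auto

lemma pl_append: "xs \<noteq> [] \<Longrightarrow> ys \<noteq> [] \<Longrightarrow>
  path_lengths (xs @ ys) = path_lengths xs + add_mset (dd (last xs) (hd ys)) (path_lengths ys)"
proof (induction xs)
  case Nil then show ?case by simp
next
  case (Cons x xs)
  show ?case
  proof (cases "xs = []")
    case True then show ?thesis using Cons by (simp add: pl_Cons)
  next
    case False
    then show ?thesis using Cons by (simp add: pl_Cons)
  qed
qed

lemma dd_sym: "dd x y = dd y x" by (simp add: dd_def)

lemma pl_rev[simp]: "path_lengths (rev xs) = path_lengths xs"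
proof (induction xs rule: length_induct)
  case (1 xs)
  show ?case
  proof (cases xs)
    case Nil then show ?thesis by simp
  next
    case (Cons x ys)
    show ?thesis
    proof (cases ys)
      case Nil then show ?thesis using Cons by simp
    next
      case (Cons y zs)
      have "path_lengths (rev xs) = path_lengths (rev ys @ [x])" using \<open>xs = x # ys\<close> by simp
      also have "\<dots> = path_lengths (rev ys) + {#dd (last (rev ys)) x#}"
        using pl_append[of "rev ys" "[x]"] Cons by simp
      also have "\<dots> = path_lengths ys + {#dd y x#}"
      proof -
        have IH: "path_lengths (rev ys) = path_lengths ys"
          using 1 \<open>xs = x # ys\<close> by (metis length_Cons lessI)
        show ?thesis using IH Cons by (simp add: last_rev)
      qed
      finally show ?thesis using \<open>xs = x # ys\<close> Cons by (simp add: dd_sym)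
    qed
  qed
qed

lemma pl_map_lin: "path_lengths (map (\<lambda>x. a * x + c) xs) = image_mset (\<lambda>l. a * l) (path_lengths xs)"
proof (induction xs rule: induct_list012)
  case (3 x y zs)
  have "dd (a*x+c) (a*y+c) = a * dd x y"
  proof -
    have "\<bar>int (a*x+c) - int (a*y+c)\<bar> = int a * \<bar>int x - int y\<bar>"
      by (simp add: abs_mult flip: right_diff_distrib)
    then show ?thesis unfolding dd_def by (simp add: nat_mult_distrib)
  qed
  then show ?case using 3 by simp
qed auto

lemma pl_upt: "path_lengths [a..<a+h] = replicate_mset (h - 1) 1"
proof (induction h arbitrary: a)
  case (Suc h)
  show ?case
  proof (cases h)
    case 0 then show ?thesis by simp
  next
    case (Suc h')
    have e: "[a..<a + Suc h] = a # [Suc a..<Suc a + h]" by (simp add: upt_conv_Cons del: upt_Suc)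
    have e2: "[Suc a..<Suc a + h] = Suc a # [Suc (Suc a)..<Suc a + h]"
      by (rule upt_conv_Cons) (use \<open>h = Suc h'\<close> in simp)
    have ne: "[Suc a..<Suc a + h] \<noteq> []" "hd [Suc a..<Suc a + h] = Suc a"
      by (subst e2, simp)+
    have "path_lengths [a..<a + Suc h] = add_mset (dd a (Suc a)) (path_lengths [Suc a..<Suc a + h])"
      unfolding e using pl_Cons[OF ne(1)] ne(2) by simp
    then show ?thesis using Suc.IH[of "Suc a"] \<open>h = Suc h'\<close>
      by (simp add: dd_def del: upt_Suc)
  qed
qed simp

lemma successively_upt: "(\<And>i. a \<le> i \<Longrightarrow> Suc i < b \<Longrightarrow> P i (Suc i)) \<Longrightarrow> successively P [a..<b]"
proof (induction b)
  case (Suc b)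
  show ?case
  proof (cases "a \<le> b")
    case True
    have "successively P [a..<b]" using Suc by auto
    show ?thesis
    proof (cases "a < b")
      case True
      have "P (b - 1) (Suc (b - 1))" using Suc.prems[of "b - 1"] True by simp
      then have "P (b - 1) b" using True by simp
      then show ?thesis using True \<open>successively P [a..<b]\<close>
        by (auto simp: successively_append_iff last_upt)
    next
      case False then show ?thesis using \<open>a \<le> b\<close> by simp
    qed
  qed simp
qed simp

lemma rep_add: "replicate_mset (a + b) x = replicate_mset a x + replicate_mset b x"
  by (induction a) auto

definition hp :: "nat \<Rightarrow> nat \<Rightarrow> nat list \<Rightarrow> nat \<Rightarrow> nat \<Rightarrow> bool" where
  "hp s N P x y \<longleftrightarrow> distinct P \<and> set P = {..<N} \<and> P \<noteq> [] \<and> hd P = 0 \<and>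
     path_lengths P = replicate_mset x 1 + replicate_mset y s"

lemma successively_desc:
  assumes "s \<ge> 2" "P 0 (s - 1)" "\<And>i. 1 \<le> i \<Longrightarrow> Suc i < s \<Longrightarrow> P (Suc i) i"
  shows "successively P (0 # rev [1..<s])"
proof -
  have ne: "rev [1..<s] \<noteq> []" using assms by simp
  have h: "hd (rev [1..<s]) = s - 1" using assms by (simp add: hd_rev last_upt)
  have "successively (\<lambda>x y. P y x) [1..<s]"
    by (rule successively_upt) (use assms in auto)
  then show ?thesis using ne h assms(2) by (simp add: successively_Cons)
qed

locale grid =
  fixes s q j :: nat
  assumes s2: "s \<ge> 2" and q1: "q \<ge> 1" and js: "j < s"
begin

definition ht :: "nat \<Rightarrow> nat" where "ht c = (if c < j then Suc q else q)"
definition col :: "nat \<Rightarrow> nat list" where "col c = map (\<lambda>i. s * i + c) [0..<ht c]"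
definition top :: "nat \<Rightarrow> nat" where "top c = c + s * (ht c - 1)"
definition run :: "(nat \<Rightarrow> bool) \<Rightarrow> nat \<Rightarrow> nat list" where
  "run D c = (if D c then col c else rev (col c))"
definition cpath :: "(nat \<Rightarrow> bool) \<Rightarrow> nat list \<Rightarrow> nat list" where
  "cpath D cs = concat (map (run D) cs)"
definition lastr :: "(nat \<Rightarrow> bool) \<Rightarrow> nat \<Rightarrow> nat" where "lastr D c = (if D c then top c else c)"
definition hdr :: "(nat \<Rightarrow> bool) \<Rightarrow> nat \<Rightarrow> nat" where "hdr D c = (if D c then c else top c)"

lemma ht_pos: "ht c \<ge> 1" using q1 by (simp add: ht_def)

lemma col_ne: "col c \<noteq> []" using ht_pos[of c] by (auto simp: col_def)
lemma run_ne: "run D c \<noteq> []" using col_ne by (simp add: run_def)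

lemma hd_col: "hd (col c) = c" using ht_pos[of c] by (simp add: col_def hd_map)
lemma last_col: "last (col c) = top c" using ht_pos[of c]
  by (simp add: col_def last_map top_def)
lemma hd_run: "hd (run D c) = hdr D c" using col_ne
  by (simp add: run_def hdr_def hd_col hd_rev last_col)
lemma last_run: "last (run D c) = lastr D c" using col_ne
  by (simp add: run_def lastr_def hd_col last_rev last_col)
lemma length_run: "length (run D c) = ht c" by (simp add: run_def col_def)

lemma pl_col: "path_lengths (col c) = replicate_mset (ht c - 1) s"
proof -
  have "path_lengths (col c) = image_mset (\<lambda>l. s * l) (path_lengths [0..<ht c])"
    unfolding col_def using pl_map_lin[of s c "[0..<ht c]"] by simp
  then show ?thesis using pl_upt[of 0 "ht c"] by simp
qed

lemma pl_run: "path_lengths (run D c) = replicate_mset (ht c - 1) s"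
  by (simp add: run_def pl_col)

lemma distinct_col: "distinct (col c)"
  using s2 by (simp add: col_def distinct_map inj_on_def)

lemma distinct_run: "distinct (run D c)"
  using distinct_col by (simp add: run_def)

lemma set_col: assumes "c < s" shows "set (col c) = {x. x < s * q + j \<and> x mod s = c}"
proof (intro set_eqI iffI)
  fix x assume "x \<in> set (col c)"
  then obtain i where i: "i < ht c" "x = s * i + c" by (auto simp: col_def)
  have "x mod s = c" using i assms by simp
  moreover have "x < s * q + j"
  proof (cases "c < j")
    case True
    then have "i \<le> q" using i by (simp add: ht_def)
    then have "s * i \<le> s * q" by simp
    then show ?thesis using i True by linarith
  next
    case False
    then have "i + 1 \<le> q" using i by (simp add: ht_def)
    then have "s * (i + 1) \<le> s * q" by (rule mult_left_mono) simp
    then show ?thesis using i assms by (simp add: algebra_simps)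
  qed
  ultimately show "x \<in> {x. x < s * q + j \<and> x mod s = c}" by simp
next
  fix x assume "x \<in> {x. x < s * q + j \<and> x mod s = c}"
  then have x: "x < s * q + j" "x mod s = c" by auto
  define i where "i = x div s"
  have xi: "x = s * i + c" using mult_div_mod_eq[of s x] x(2) by (simp add: i_def)
  have "i < ht c"
  proof (cases "c < j")
    case True
    have "s * i < s * Suc q" using x(1) xi js by simp
    then have "i < Suc q" by (metis mult_less_cancel1)
    then show ?thesis using True by (simp add: ht_def)
  next
    case False
    have "s * i < s * q" using x(1) xi False by linarith
    then have "i < q" by (metis mult_less_cancel1)
    then show ?thesis using False by (simp add: ht_def)
  qed
  then show "x \<in> set (col c)" using xi by (auto simp: col_def)
qed

lemma set_run: "c < s \<Longrightarrow> set (run D c) = {x. x < s * q + j \<and> x mod s = c}"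
  by (simp add: run_def set_col)

lemma cpath_Nil[simp]: "cpath D [] = []" by (simp add: cpath_def)
lemma cpath_Cons[simp]: "cpath D (c # cs) = run D c @ cpath D cs" by (simp add: cpath_def)
lemma cpath_append: "cpath D (as @ bs) = cpath D as @ cpath D bs" by (simp add: cpath_def)

lemma set_cpath: "set cs \<subseteq> {..<s} \<Longrightarrow> set (cpath D cs) = {x. x < s * q + j \<and> x mod s \<in> set cs}"
  by (induction cs) (auto simp: set_run)

lemma distinct_cpath: "distinct cs \<Longrightarrow> set cs \<subseteq> {..<s} \<Longrightarrow> distinct (cpath D cs)"
proof (induction cs)
  case (Cons c cs)
  then show ?case using distinct_run[of D c] by (auto simp: set_run set_cpath)
qed simp

lemma cpath_ne: "cs \<noteq> [] \<Longrightarrow> cpath D cs \<noteq> []"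
  by (cases cs) (auto simp: run_ne)

lemma hd_cpath: "cs \<noteq> [] \<Longrightarrow> hd (cpath D cs) = hdr D (hd cs)"
  by (cases cs) (auto simp: run_ne hd_run)

lemma last_cpath: "cs \<noteq> [] \<Longrightarrow> last (cpath D cs) = lastr D (last cs)"
proof (induction cs)
  case (Cons c cs)
  then show ?case by (cases "cs = []") (auto simp: last_run cpath_ne run_ne)
qed simp

lemma length_cpath: "length (cpath D cs) \<ge> length cs"
proof (induction cs)
  case (Cons c cs)
  then show ?case using ht_pos[of c] by (simp add: length_run)
qed simp

lemma pl_cpath:
  assumes "successively (\<lambda>a b. dd (lastr D a) (hdr D b) = 1) cs" "cs \<noteq> []"
  shows "path_lengths (cpath D cs) =
     replicate_mset (length cs - 1) 1 + replicate_mset (length (cpath D cs) - length cs) s"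
  using assms
proof (induction cs)
  case (Cons c cs)
  show ?case
  proof (cases "cs = []")
    case True
    then show ?thesis by (simp add: pl_run length_run)
  next
    case False
    have j1: "dd (lastr D c) (hdr D (hd cs)) = 1"
      using Cons.prems False by (cases cs) auto
    have IH: "path_lengths (cpath D cs) =
      replicate_mset (length cs - 1) 1 + replicate_mset (length (cpath D cs) - length cs) s"
      using Cons.IH Cons.prems False by (cases cs) auto
    have "path_lengths (cpath D (c # cs)) = path_lengths (run D c) +
       add_mset (dd (lastr D c) (hdr D (hd cs))) (path_lengths (cpath D cs))"
      using pl_append[OF run_ne cpath_ne[OF False], of D c D] False
      by (simp add: last_run hd_cpath)
    also have "\<dots> = replicate_mset (ht c - 1) s + add_mset 1 (
       replicate_mset (length cs - 1) 1 + replicate_mset (length (cpath D cs) - length cs) s)"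
      using j1 IH by (simp add: pl_run)
    also have "\<dots> = replicate_mset (length (c # cs) - 1) 1 +
       replicate_mset (length (cpath D (c # cs)) - length (c # cs)) s"
    proof -
      have "length cs \<ge> 1" using False by (cases cs) auto
      moreover have "length (cpath D cs) \<ge> length cs" by (rule length_cpath)
      moreover have "ht c \<ge> 1" by (rule ht_pos)
      ultimately have e1: "length (c # cs) - 1 = Suc (length cs - 1)"
        and e2: "length (cpath D (c # cs)) - length (c # cs) = (ht c - 1) + (length (cpath D cs) - length cs)"
        by (auto simp: length_run)
      show ?thesis unfolding e1 e2 by (simp add: rep_add)
    qed
    finally show ?thesis .
  qed
qed simp

lemma top_lt: "c < j \<Longrightarrow> top c = c + s * q" by (simp add: top_def ht_def)
lemma top_ge: "\<not> c < j \<Longrightarrow> top c = c + s * (q - 1)" by (simp add: top_def ht_def)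

lemma jn_top: assumes "D a" "\<not> D b" "b = Suc a" "j \<noteq> Suc a"
  shows "dd (lastr D a) (hdr D b) = 1"
proof (cases "a < j")
  case True then have "b < j" using assms by simp
  then show ?thesis using True assms by (simp add: lastr_def hdr_def top_lt dd_def)
next
  case False then have "\<not> b < j" using assms by simp
  then show ?thesis using False assms by (simp add: lastr_def hdr_def top_ge dd_def)
qed

lemma jn_top': assumes "D a" "\<not> D b" "a = Suc b" "j \<noteq> Suc b"
  shows "dd (lastr D a) (hdr D b) = 1"
proof (cases "b < j")
  case True then have "a < j" using assms by simp
  then show ?thesis using True assms by (simp add: lastr_def hdr_def top_lt dd_def)
next
  case False then have "\<not> a < j" using assms by simp
  then show ?thesis using False assms by (simp add: lastr_def hdr_def top_ge dd_def)
qed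

lemma jn_bot: assumes "\<not> D a" "D b" "b = Suc a \<or> a = Suc b"
  shows "dd (lastr D a) (hdr D b) = 1"
  using assms by (auto simp: lastr_def hdr_def dd_def)

lemma jn_wrap: assumes "D 0" "\<not> D (s - 1)" "0 < j"
  shows "dd (lastr D 0) (hdr D (s - 1)) = 1"
proof -
  have "\<not> s - 1 < j" using js by simp
  then have "top (s - 1) = s - 1 + s * (q - 1)" by (rule top_ge)
  also have "\<dots> + 1 = s * q" using q1 s2
    by (cases q) (auto simp: algebra_simps)
  finally have "top 0 = top (s - 1) + 1" using assms top_lt[of 0] by simp
  then show ?thesis using assms by (simp add: lastr_def hdr_def dd_def)
qed

lemma length_cpath_full:
  assumes "distinct cs" "set cs = {..<s}"
  shows "length (cpath D cs) = s * q + j"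
proof -
  have "length (cpath D cs) = card (set (cpath D cs))"
    using distinct_cpath[of cs D] assms by (simp add: distinct_card)
  also have "set (cpath D cs) = {..<s * q + j}"
    using set_cpath[of cs D] assms s2 by auto
  finally show ?thesis by simp
qed

lemma full_path:
  assumes "distinct cs" "set cs = {..<s}" "hd cs = 0" "D 0"
    "successively (\<lambda>a b. dd (lastr D a) (hdr D b) = 1) cs"
  shows "hp s (s * q + j) (cpath D cs) (s - 1) (s * q + j - s)"
proof -
  have ne: "cs \<noteq> []" using assms(2) s2 by (metis empty_set lessThan_empty_iff not_numeral_le_zero)
  have len: "length cs = s" using assms(1,2) distinct_card[of cs] by simp
  have L: "length (cpath D cs) = s * q + j" by (rule length_cpath_full[OF assms(1,2)])
  have d: "distinct (cpath D cs)" using distinct_cpath[of cs D] assms by simp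
  have md: "\<And>x. x mod s < s" using s2 by simp
  have st: "set (cpath D cs) = {..<s * q + j}" using set_cpath[of cs D] assms(2) md by auto
  have h: "hd (cpath D cs) = 0" using hd_cpath[OF ne, of D] assms by (simp add: hdr_def)
  have p: "path_lengths (cpath D cs) = replicate_mset (s - 1) 1 + replicate_mset (s * q + j - s) s"
    using pl_cpath[OF assms(5) ne] len L by simp
  show ?thesis unfolding hp_def using d st h p cpath_ne[OF ne, of D] by blast
qed


lemma asc_path: assumes "even j"
  shows "hp s (s * q + j) (cpath even [0..<s]) (s - 1) (s * q + j - s)"
proof (rule full_path)
  show "successively (\<lambda>a b. dd (lastr even a) (hdr even b) = 1) [0..<s]"
  proof (rule successively_upt)
    fix i assume "0 \<le> i" "Suc i < s"
    show "dd (lastr even i) (hdr even (Suc i)) = 1"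
    proof (cases "even i")
      case True
      then show ?thesis using assms by (intro jn_top) auto
    next
      case False
      then show ?thesis by (intro jn_bot) auto
    qed
  qed
qed (use s2 in auto)

lemma descB_path: assumes "even s" "odd j"
  shows "hp s (s * q + j) (cpath even (0 # rev [1..<s])) (s - 1) (s * q + j - s)"
proof (rule full_path)
  show "successively (\<lambda>a b. dd (lastr even a) (hdr even b) = 1) (0 # rev [1..<s])"
  proof (rule successively_desc[OF s2])
    show "dd (lastr even 0) (hdr even (s - 1)) = 1"
      using assms s2 by (intro jn_wrap) (auto intro!: Nat.gr0I)
  next
    fix i assume "1 \<le> i" "Suc i < s"
    show "dd (lastr even (Suc i)) (hdr even i) = 1"
    proof (cases "even (Suc i)")
      case True
      then show ?thesis using assms by (intro jn_top') auto
    next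
      case False
      then show ?thesis by (intro jn_bot) auto
    qed
  qed
qed (use s2 in auto)

lemma descE_path: assumes "odd s" "even j" "0 < j"
  shows "hp s (s * q + j) (cpath (\<lambda>c. c = 0 \<or> odd c) (0 # rev [1..<s])) (s - 1) (s * q + j - s)"
   and "last (cpath (\<lambda>c. c = 0 \<or> odd c) (0 # rev [1..<s])) = 1 + s * q"
proof -
  let ?D = "\<lambda>c::nat. c = 0 \<or> odd c"
  show "hp s (s * q + j) (cpath ?D (0 # rev [1..<s])) (s - 1) (s * q + j - s)"
  proof (rule full_path)
    show "successively (\<lambda>a b. dd (lastr ?D a) (hdr ?D b) = 1) (0 # rev [1..<s])"
    proof (rule successively_desc[OF s2])
      show "dd (lastr ?D 0) (hdr ?D (s - 1)) = 1"
        using assms s2 by (intro jn_wrap) auto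
    next
      fix i assume "1 \<le> i" "Suc i < s"
      show "dd (lastr ?D (Suc i)) (hdr ?D i) = 1"
      proof (cases "odd (Suc i)")
        case True
        then show ?thesis using assms \<open>1 \<le> i\<close> by (intro jn_top') auto
      next
        case False
        then show ?thesis using \<open>1 \<le> i\<close> by (intro jn_bot) auto
      qed
    qed
  qed (use s2 in auto)
  have "last (0 # rev [1..<s]) = 1" using s2 by (simp add: last_rev)
  moreover have "1 < j" using assms by (metis One_nat_def odd_one less_Suc0 nat_neq_iff)
  ultimately show "last (cpath ?D (0 # rev [1..<s])) = 1 + s * q"
    using last_cpath[of "0 # rev [1..<s]" ?D] by (simp add: lastr_def top_lt)
qed

lemma excQ_path: assumes "odd s" "odd j"
  shows "hp s (s * q + j) (0 # (cpath odd [1..<s] @ tl (col 0))) s (s * q + j - s - 1)"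
    and "last (0 # (cpath odd [1..<s] @ tl (col 0))) = s * q"
proof -
  define A where "A = cpath odd [1..<s]"
  define B where "B = tl (col 0)"
  define N where "N = s * q + j"
  have s3: "s \<ge> 3" using assms s2 by presburger
  have j0: "0 < j" using assms by (intro Nat.gr0I) auto
  have ne1: "[1..<s] \<noteq> []" using s3 by simp
  have Ane: "A \<noteq> []" unfolding A_def using cpath_ne[OF ne1] .
  have ht0: "ht 0 = Suc q" using j0 by (simp add: ht_def)
  have col0: "col 0 = 0 # B"
    using ht_pos[of 0] unfolding B_def by (metis col_ne hd_Cons_tl hd_col)
  have Bdef: "B = map (\<lambda>i. s * i) [1..<Suc q]"
    unfolding B_def col_def ht0 by (simp add: map_tl upt_conv_Cons del: upt_Suc)
  have Bne: "B \<noteq> []" using q1 Bdef by simp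
  have hdB: "hd B = s"
  proof -
    have "[1..<Suc q] = 1 # [Suc 1..<Suc q]" using q1 by (simp add: upt_conv_Cons del: upt_Suc)
    then show ?thesis using Bdef by simp
  qed
  have lastB: "last B = s * q"
    using Bdef q1 by (simp add: last_map del: upt_Suc)
  have plB: "path_lengths B = replicate_mset (q - 1) s"
  proof -
    have "path_lengths (col 0) = add_mset (dd 0 s) (path_lengths B)"
      using col0 pl_Cons[OF Bne, of 0] hdB by simp
    then have "add_mset s (path_lengths B) = replicate_mset q s"
      using pl_col[of 0] ht0 by (simp add: dd_def)
    then show ?thesis using q1 by (cases q) auto
  qed
  have dcol: "distinct (col 0)" by (rule distinct_col)
  have setcol: "set (col 0) = {x. x < N \<and> x mod s = 0}"
    using set_col[of 0] s2 unfolding N_def by simp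
  have setB: "set B = {x. x < N \<and> x mod s = 0} - {0}"
  proof -
    have "set B = set (col 0) - {0}" using dcol col0 by (metis Diff_insert_absorb distinct.simps(2) list.simps(15))
    then show ?thesis using setcol by simp
  qed
  have dB: "distinct B" using dcol col0 by simp
  have sub: "set [1..<s] \<subseteq> {..<s}" by auto
  have setA: "set A = {x. x < N \<and> x mod s \<in> {1..<s}}"
    unfolding A_def N_def using set_cpath[OF sub, of odd] by simp
  have dA: "distinct A" unfolding A_def by (rule distinct_cpath) auto
  have hdA: "hd A = 1" unfolding A_def using hd_cpath[OF ne1, of odd] s3 by (simp add: hdr_def hd_upt)
  have lastA: "last A = s - 1" unfolding A_def using last_cpath[OF ne1, of odd] s3 assms(1)
    by (simp add: lastr_def last_upt)
  have chain: "successively (\<lambda>a b. dd (lastr odd a) (hdr odd b) = 1) [1..<s]"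
  proof (rule successively_upt)
    fix i assume "1 \<le> i" "Suc i < s"
    show "dd (lastr odd i) (hdr odd (Suc i)) = 1"
    proof (cases "odd i")
      case True
      then show ?thesis using assms by (intro jn_top) auto
    next
      case False
      then show ?thesis by (intro jn_bot) auto
    qed
  qed
  have plA: "path_lengths A = replicate_mset (s - 2) 1 + replicate_mset (length A - (s - 1)) s"
    using pl_cpath[OF chain ne1] unfolding A_def by (simp add: numeral_2_eq_2)
  let ?Q = "0 # (A @ B)"
  have md: "\<And>x. x mod s < s" using s2 by simp
  have setQ: "set ?Q = {..<N}"
  proof -
    have "set ?Q = {0} \<union> set A \<union> set B" by auto
    also have "\<dots> = {..<N}"
    proof (intro set_eqI iffI)
      fix x assume "x \<in> {0} \<union> set A \<union> set B"
      moreover have "0 < N" using j0 unfolding N_def by simp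
      ultimately show "x \<in> {..<N}" using setA setB by blast
    next
      fix x assume x: "x \<in> {..<N}"
      show "x \<in> {0} \<union> set A \<union> set B"
      proof (cases "x = 0")
        case False
        show ?thesis
        proof (cases "x mod s = 0")
          case True then have "x \<in> set B" using setB x False by simp
          then show ?thesis by simp
        next
          case F2: False
          then have "x mod s \<in> {1..<s}" using md[of x] by simp
          then have "x \<in> set A" using setA x by simp
          then show ?thesis by simp
        qed
      qed simp
    qed
    finally show ?thesis .
  qed
  have dQ: "distinct ?Q"
  proof -
    have "0 \<notin> set A" using setA by simp
    moreover have "0 \<notin> set B" using setB by simp
    moreover have "set A \<inter> set B = {}"
    proof -
      have "x \<notin> set B" if "x \<in> set A" for x
      proof
        assume "x \<in> set B"
        then have "x mod s \<in> {1..<s}" "x mod s = 0" using setA setB that by blast+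
        then show False by simp
      qed
      then show ?thesis by blast
    qed
    ultimately show ?thesis using dA dB by simp
  qed
  have lenQ: "length ?Q = N" using distinct_card[OF dQ] setQ by simp
  have lenB: "length B = q" using Bdef by simp
  have lenA: "length A = N - 1 - q" using lenQ lenB by simp
  have sq: "s * q + 1 \<ge> s + q"
  proof -
    obtain s' q' where "s = Suc s'" "q = Suc q'" using s2 q1 by (metis Suc_le_D numeral_2_eq_2 Suc_leD One_nat_def)
    then show ?thesis by simp
  qed
  have plQ: "path_lengths ?Q = replicate_mset s 1 + replicate_mset (N - s - 1) s"
  proof -
    have "path_lengths ?Q = add_mset (dd 0 1) (path_lengths A + add_mset (dd (s - 1) s) (path_lengths B))"
      using pl_Cons[of "A @ B" 0] pl_append[OF Ane Bne] Ane hdA lastA hdB by simp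
    also have "\<dots> = add_mset 1 (replicate_mset (s - 2) 1 + replicate_mset (length A - (s - 1)) s
        + add_mset 1 (replicate_mset (q - 1) s))"
      using plA plB s2 by (simp add: dd_def)
    also have "\<dots> = replicate_mset (Suc (Suc (s - 2))) 1 + replicate_mset ((length A - (s - 1)) + (q - 1)) s"
      by (simp add: rep_add)
    also have "Suc (Suc (s - 2)) = s" using s2 by simp
    also have "(length A - (s - 1)) + (q - 1) = N - s - 1"
      using lenA sq q1 j0 s2 unfolding N_def by linarith
    finally show ?thesis .
  qed
  show "hp s (s * q + j) (0 # (cpath odd [1..<s] @ tl (col 0))) s (s * q + j - s - 1)"
    unfolding hp_def using dQ setQ plQ unfolding A_def B_def N_def by simp
  show "last (0 # (cpath odd [1..<s] @ tl (col 0))) = s * q"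
    using lastB Bne unfolding B_def by simp
qed
end


definition ok :: "nat \<Rightarrow> nat multiset \<Rightarrow> nat list \<Rightarrow> bool" where
  "ok v L xs \<longleftrightarrow> distinct xs \<and> set xs = {..<v} \<and> xs \<noteq> [] \<and> hd xs = 0 \<and> last xs = 1 \<and>
     path_lengths xs = L"

lemma combine:
  assumes P: "hp s Ev P x1 y1" and Q: "hp s Od Q x2 y2"
    and lP: "last P = a" and lQ: "last Q = a'" and j: "dd (2 * a) (2 * a' + 1) = 1"
    and EO: "Ev = Od \<or> Ev = Suc Od"
  shows "ok (Ev + Od) (add_mset 1 (replicate_mset (x1 + x2) 2 + replicate_mset (y1 + y2) (2 * s)))
           (map (\<lambda>x. 2 * x + 0) P @ map (\<lambda>x. 2 * x + 1) (rev Q))"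
proof -
  let ?A = "map (\<lambda>x. 2 * x + 0) P" and ?B = "map (\<lambda>x. 2 * x + 1) (rev Q)"
  have dP: "distinct P" "set P = {..<Ev}" "P \<noteq> []" "hd P = 0"
    "path_lengths P = replicate_mset x1 1 + replicate_mset y1 s" using P by (auto simp: hp_def)
  have dQ: "distinct Q" "set Q = {..<Od}" "Q \<noteq> []" "hd Q = 0"
    "path_lengths Q = replicate_mset x2 1 + replicate_mset y2 s" using Q by (auto simp: hp_def)
  have Ane: "?A \<noteq> []" and Bne: "?B \<noteq> []" using dP dQ by auto
  have lastA: "last ?A = 2 * a" using dP lP by (simp add: last_map)
  have hdB: "hd ?B = 2 * a' + 1" using dQ lQ by (simp add: hd_map hd_rev)
  have pl: "path_lengths (?A @ ?B) = add_mset 1 (replicate_mset (x1 + x2) 2 + replicate_mset (y1 + y2) (2 * s))"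
  proof -
    have "path_lengths (?A @ ?B) = path_lengths ?A + add_mset 1 (path_lengths ?B)"
      using pl_append[OF Ane Bne] lastA hdB j by simp
    also have "path_lengths ?A = image_mset (\<lambda>l. 2 * l) (path_lengths P)" by (rule pl_map_lin)
    also have "path_lengths ?B = image_mset (\<lambda>l. 2 * l) (path_lengths (rev Q))" by (rule pl_map_lin)
    finally show ?thesis using dP dQ by (simp add: rep_add)
  qed
  have inj1: "inj_on (\<lambda>x::nat. 2 * x + 0) A" for A by (auto simp: inj_on_def)
  have inj2: "inj_on (\<lambda>x::nat. 2 * x + 1) A" for A by (auto simp: inj_on_def)
  have disj: "set ?A \<inter> set ?B = {}"
  proof -
    have "x \<notin> set ?B" if "x \<in> set ?A" for x
      using that by auto presburger
    then show ?thesis by blast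
  qed
  have dist: "distinct (?A @ ?B)"
    using dP dQ disj by (simp add: distinct_map inj_on_def)
  have st: "set (?A @ ?B) = {..<Ev + Od}"
  proof (intro set_eqI iffI)
    fix x assume "x \<in> set (?A @ ?B)"
    then consider (a) i where "i \<in> set P" "x = 2 * i" | (b) i where "i \<in> set Q" "x = 2 * i + 1"
      by auto
    then show "x \<in> {..<Ev + Od}"
    proof cases
      case a
      then have "i < Ev" using dP by simp
      then show ?thesis using a EO by auto
    next
      case b
      then have "i < Od" using dQ by simp
      then show ?thesis using b EO by auto
    qed
  next
    fix x assume x: "x \<in> {..<Ev + Od}"
    show "x \<in> set (?A @ ?B)"
    proof (cases "even x")
      case True
      then obtain i where i: "x = 2 * i" by blast
      then have "i < Ev" using x EO by auto
      then show ?thesis using i dP by auto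
    next
      case False
      then obtain i where i: "x = 2 * i + 1" using oddE by blast
      then have "i < Od" using x EO by auto
      then show ?thesis using i dQ by auto
    qed
  qed
  have hd: "hd (?A @ ?B) = 0" using dP by (simp add: hd_map)
  have lst: "last (?A @ ?B) = 1" using dQ Bne by (simp add: last_map last_rev)
  show ?thesis unfolding ok_def using dist st hd lst pl Ane by simp
qed

lemma extend1:
  assumes "ok v L xs"
  shows "ok (Suc v) (add_mset 2 L) (0 # map (\<lambda>x. 1 * x + 1) (rev xs))"
proof -
  let ?B = "map (\<lambda>x. 1 * x + 1) (rev xs)"
  have d: "distinct xs" "set xs = {..<v}" "xs \<noteq> []" "hd xs = 0" "last xs = 1" "path_lengths xs = L"
    using assms by (auto simp: ok_def)
  have Bne: "?B \<noteq> []" using d by simp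
  have hdB: "hd ?B = 2" using d by (simp add: hd_map hd_rev)
  have plB: "path_lengths ?B = L" using pl_map_lin[of 1 1 "rev xs"] d by simp
  have "path_lengths (0 # ?B) = add_mset 2 L" using pl_Cons[OF Bne, of 0] hdB plB by (simp add: dd_def)
  moreover have "distinct (0 # ?B)" using d by (auto simp: distinct_map inj_on_def)
  moreover have "set (0 # ?B) = {..<Suc v}"
  proof (intro set_eqI iffI)
    fix x assume "x \<in> set (0 # ?B)" then show "x \<in> {..<Suc v}" using d by auto
  next
    fix x assume x: "x \<in> {..<Suc v}"
    show "x \<in> set (0 # ?B)"
    proof (cases x)
      case (Suc y) then have "y \<in> set xs" using x d by simp
      then show ?thesis using Suc by auto
    qed simp
  qed
  moreover have "last (0 # ?B) = 1" using d Bne by (simp add: last_map last_rev)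
  ultimately show ?thesis unfolding ok_def by simp
qed

lemma extend:
  assumes "ok v L xs"
  shows "\<exists>ys. ok (v + e) (L + replicate_mset e 2) ys"
proof (induction e)
  case 0 then show ?case using assms by auto
next
  case (Suc e)
  then obtain ys where "ok (v + e) (L + replicate_mset e 2) ys" by blast
  from extend1[OF this] show ?case by auto
qed


lemma ok_special:
  assumes "ok v (L12t b t m) xs" "v = b + m + 2" "t > 0" "m > 0 \<Longrightarrow> t \<le> b + m + 1"
  shows "special_linear_realization_2 v (L12t b t m) xs"
proof -
  have d: "distinct xs" "set xs = {..<v}" "xs \<noteq> []" "hd xs = 0" "last xs = 1"
    "path_lengths xs = L12t b t m" using assms(1) by (auto simp: ok_def)
  have sz: "size (L12t b t m) = v - 1" using assms(2) by (simp add: L12t_def)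
  have bnd: "\<forall>l\<in>#L12t b t m. 0 < l \<and> l \<le> v - 1"
    using assms(2-4) by (auto simp: L12t_def)
  have "{0..<v} = {..<v}" by auto
  then show ?thesis unfolding special_linear_realization_2_def linear_realization_def
    using d sz bnd by auto
qed

lemma ok_extend:
  assumes "ok (b0 + m + 2) (L12t b0 t m) xs" "b0 \<le> b"
  shows "\<exists>ys. ok (b + m + 2) (L12t b t m) ys"
proof -
  obtain ys where ys: "ok (b0 + m + 2 + (b - b0)) (L12t b0 t m + replicate_mset (b - b0) 2) ys"
    using extend[OF assms(1)] by blast
  have eq1: "b0 + m + 2 + (b - b0) = b + m + 2" using assms(2) by simp
  have eq2: "L12t b0 t m + replicate_mset (b - b0) 2 = L12t b t m"
  proof -
    have "b = b0 + (b - b0)" using assms(2) by simp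
    then have "replicate_mset b 2 = replicate_mset b0 2 + replicate_mset (b - b0) (2::nat)"
      by (metis rep_add)
    then show ?thesis by (simp add: L12t_def ac_simps)
  qed
  show ?thesis using ys unfolding eq1 eq2 by blast
qed

theorem proposition3p9:
  fixes t k d b :: nat
  assumes "t \<ge> 4" and "even t" and "even d" and "d < t"
    and "if d mod 4 = 2 \<and> t mod 4 = 2 then b \<ge> t - 1 else b \<ge> t - 2"
  shows "\<exists>xs. special_linear_realization_2 (b + (t * k + d) + 2)
                (L12t b t (t * k + d)) xs"
proof -
  define s where "s = t div 2"
  define j where "j = d div 2"
  define q where "q = Suc k"
  define m where "m = t * k + d"
  have t2: "t = 2 * s" using assms(2) unfolding s_def by simp
  have d2: "d = 2 * j" using assms(3) unfolding j_def by simp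
  have s2: "s \<ge> 2" using assms(1) t2 by simp
  have js: "j < s" using assms(4) t2 d2 by simp
  have q1: "q \<ge> 1" unfolding q_def by simp
  have sq: "s * q = s * k + s" unfolding q_def by simp
  have mdef: "m = 2 * (s * k) + 2 * j" unfolding m_def using t2 d2 by simp
  have exc: "(d mod 4 = 2 \<and> t mod 4 = 2) \<longleftrightarrow> odd j \<and> odd s"
    using t2 d2 by presburger
  have "\<exists>b0 xs. ok (b0 + m + 2) (L12t b0 t m) xs \<and> b0 \<le> b \<and> b0 + 2 \<ge> t"
  proof (cases "odd j \<and> odd s")
    case True
    have b: "b \<ge> 2 * s - 1" using assms(5) True exc t2 by simp
    have js1: "Suc j < s" using True js by (metis Suc_lessI even_Suc)
    interpret g1: grid s q "Suc j" using s2 q1 js1 by unfold_locales auto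
    interpret g2: grid s q j using s2 q1 js by unfold_locales auto
    let ?P = "g1.cpath (\<lambda>c. c = 0 \<or> odd c) (0 # rev [1..<s])"
    let ?Q = "0 # (g2.cpath odd [1..<s] @ tl (g2.col 0))"
    have P: "hp s (s * q + Suc j) ?P (s - 1) (s * q + Suc j - s)" "last ?P = 1 + s * q"
      using g1.descE_path True by auto
    have Q: "hp s (s * q + j) ?Q s (s * q + j - s - 1)" "last ?Q = s * q"
      using g2.excQ_path True by auto
    have jn: "dd (2 * (1 + s * q)) (2 * (s * q) + 1) = 1" by (simp add: dd_def)
    have C: "ok ((s * q + Suc j) + (s * q + j))
       (add_mset 1 (replicate_mset ((s - 1) + s) 2 + replicate_mset ((s * q + Suc j - s) + (s * q + j - s - 1)) (2 * s)))
       (map (\<lambda>x. 2 * x + 0) ?P @ map (\<lambda>x. 2 * x + 1) (rev ?Q))"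
      by (rule combine[OF P(1) Q(1) P(2) Q(2) jn]) simp
    have j0: "j \<ge> 1" using True by (cases j) auto
    have e1: "(s * q + Suc j) + (s * q + j) = (2 * s - 1) + m + 2" using mdef sq s2 by simp
    have e2: "(s - 1) + s = 2 * s - 1" using s2 by simp
    have e3: "(s * q + Suc j - s) + (s * q + j - s - 1) = m" using mdef sq s2 j0 by simp
    have "ok ((2 * s - 1) + m + 2) (L12t (2 * s - 1) t m) (map (\<lambda>x. 2 * x + 0) ?P @ map (\<lambda>x. 2 * x + 1) (rev ?Q))"
      using C unfolding e1 e2 e3 by (simp add: L12t_def t2)
    then show ?thesis using b t2 by (intro exI[of _ "2 * s - 1"]) auto
  next
    case False
    have b: "b \<ge> 2 * s - 2" using assms(5) False exc t2 by (auto split: if_splits)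
    interpret g: grid s q j using s2 q1 js by unfold_locales auto
    obtain P where P: "hp s (s * q + j) P (s - 1) (s * q + j - s)"
    proof (cases "even j")
      case True
      then show ?thesis using g.asc_path that by blast
    next
      case F2: False
      then have "even s" using False by simp
      then show ?thesis using g.descB_path F2 that by blast
    qed
    have jn: "dd (2 * last P) (2 * last P + 1) = 1" by (simp add: dd_def)
    have C: "ok ((s * q + j) + (s * q + j))
       (add_mset 1 (replicate_mset ((s - 1) + (s - 1)) 2 + replicate_mset ((s * q + j - s) + (s * q + j - s)) (2 * s)))
       (map (\<lambda>x. 2 * x + 0) P @ map (\<lambda>x. 2 * x + 1) (rev P))"
      by (rule combine[OF P P refl refl jn]) simp
    have e1: "(s * q + j) + (s * q + j) = (2 * s - 2) + m + 2" using mdef sq s2 by simp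
    have e2: "(s - 1) + (s - 1) = 2 * s - 2" using s2 by simp
    have e3: "(s * q + j - s) + (s * q + j - s) = m" using mdef sq s2 by simp
    have "ok ((2 * s - 2) + m + 2) (L12t (2 * s - 2) t m) (map (\<lambda>x. 2 * x + 0) P @ map (\<lambda>x. 2 * x + 1) (rev P))"
      using C unfolding e1 e2 e3 by (simp add: L12t_def t2)
    then show ?thesis using b t2 s2 by (intro exI[of _ "2 * s - 2"]) auto
  qed
  then obtain b0 xs where ok0: "ok (b0 + m + 2) (L12t b0 t m) xs" and b0: "b0 \<le> b" "b0 + 2 \<ge> t"
    by blast
  obtain ys where ys: "ok (b + m + 2) (L12t b t m) ys" using ok_extend[OF ok0 b0(1)] by blast
  have "m > 0 \<Longrightarrow> t \<le> b + m + 1"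
  proof -
    assume "m > 0"
    moreover have "m = 2 * (s * k + j)" using mdef by simp
    ultimately have "m \<ge> 2" by (metis mult_2 add_le_mono nat_0_less_mult_iff Suc_leI One_nat_def le_add1 one_add_one mult_le_mono2)
    then show ?thesis using b0 by simp
  qed
  then have "special_linear_realization_2 (b + m + 2) (L12t b t m) ys"
    using ok_special[OF ys] assms(1) by simp
  then show ?thesis unfolding m_def by blast
qed

end
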